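(* Let $1\le p<\infty$ with $p\ne2$, and let $X$ be a closed subspace of $L_p(\mathbb{R})$ not containing an isomorph of $\ell_p$. Then there exists $c>0$ such that $|||f|||=\|f|_{[-c,c]}\|_p$ is an equivalent norm on $X$.
   Context: $f|_{[-c,c]}$ denotes the restriction of $f$ to $[-c,c]$. "Equivalent norm" means there is $C$ with $|||f|||\le\|f\|_p\le C|||f|||$ for all $f\in X$. *)

theory Defs
  imports "HOL-Analysis.Analysis"
begin

text \<open>Real-valued L_p(R) w.r.t. Lebesgue measure, represented by Borel functions;
  elements equal a.e. are identified only through the (semi)norm.\<close>

definition Lp_space :: "real \<Rightarrow> (real \<Rightarrow> real) set" where
  "Lp_space p = {f. f \<in> borel_measurable lborel \<and> integrable lborel (\<lambda>x. \<bar>f x\<bar> powr p)}"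

definition Lp_norm :: "real \<Rightarrow> (real \<Rightarrow> real) \<Rightarrow> real" where
  "Lp_norm p f = (integral\<^sup>L lborel (\<lambda>x. \<bar>f x\<bar> powr p)) powr (1 / p)"

text \<open>A closed linear subspace of L_p(R) (as a set of representatives, hence saturated
  under a.e. equality).\<close>

definition closed_Lp_subspace :: "real \<Rightarrow> (real \<Rightarrow> real) set \<Rightarrow> bool" where
  "closed_Lp_subspace p X \<longleftrightarrow>
     X \<subseteq> Lp_space p \<and> (\<lambda>x. 0) \<in> X \<and>
     (\<forall>f\<in>X. \<forall>g\<in>X. (\<lambda>x. f x + g x) \<in> X) \<and>
     (\<forall>f\<in>X. \<forall>c::real. (\<lambda>x. c * f x) \<in> X) \<and>
     (\<forall>f\<in>Lp_space p. (\<forall>e>0. \<exists>g\<in>X. Lp_norm p (\<lambda>x. f x - g x) < e) \<longrightarrow> f \<in> X)"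

definition lp_space :: "real \<Rightarrow> (nat \<Rightarrow> real) set" where
  "lp_space p = {a. summable (\<lambda>n. \<bar>a n\<bar> powr p)}"

definition lp_norm :: "real \<Rightarrow> (nat \<Rightarrow> real) \<Rightarrow> real" where
  "lp_norm p a = (\<Sum>n. \<bar>a n\<bar> powr p) powr (1 / p)"

text \<open>X contains an isomorph of l_p: a linear (modulo a.e. equality) isomorphic
  embedding T of l_p into X.\<close>

definition contains_lp_copy :: "real \<Rightarrow> (real \<Rightarrow> real) set \<Rightarrow> bool" where
  "contains_lp_copy p X \<longleftrightarrow>
     (\<exists>T :: (nat \<Rightarrow> real) \<Rightarrow> (real \<Rightarrow> real). \<exists>A B. A > 0 \<and> B > 0 \<and>
       (\<forall>a\<in>lp_space p. T a \<in> X \<and>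
          A * lp_norm p a \<le> Lp_norm p (T a) \<and> Lp_norm p (T a) \<le> B * lp_norm p a) \<and>
       (\<forall>a\<in>lp_space p. \<forall>b\<in>lp_space p.
          Lp_norm p (\<lambda>t. T (\<lambda>n. a n + b n) t - T a t - T b t) = 0) \<and>
       (\<forall>a\<in>lp_space p. \<forall>c::real.
          Lp_norm p (\<lambda>t. T (\<lambda>n. c * a n) t - c * T a t) = 0))"

end

theory Submission
  imports Defs
begin

definition Qn :: "real \<Rightarrow> (real \<Rightarrow> real) \<Rightarrow> ennreal" where
  "Qn p f = (\<integral>\<^sup>+x. ennreal (\<bar>f x\<bar> powr p) \<partial>lborel)"

lemma Lp_space_iff_Q:
  assumes "f \<in> borel_measurable lborel"
  shows "f \<in> Lp_space p \<longleftrightarrow> Qn p f < \<infinity>"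
  using assms unfolding Lp_space_def Qn_def
  by (subst integrable_iff_bounded) (auto)

lemma Lp_norm_Q:
  assumes "f \<in> borel_measurable lborel"
  shows "Lp_norm p f = enn2real (Qn p f) powr (1/p)"
  unfolding Lp_norm_def Qn_def
  using assms by (subst integral_eq_nn_integral) auto

lemma Lp_memD: "f \<in> Lp_space p \<Longrightarrow> f \<in> borel_measurable lborel"
  unfolding Lp_space_def by auto

lemma Lp_memQ: "f \<in> Lp_space p \<Longrightarrow> Qn p f < \<infinity>"
  using Lp_space_iff_Q Lp_memD by blast

lemma Qn_cmult:
  assumes "f \<in> borel_measurable lborel" "p > 0"
  shows "Qn p (\<lambda>x. k * f x) = ennreal (\<bar>k\<bar> powr p) * Qn p f"
proof -
  have "Qn p (\<lambda>x. k * f x) = (\<integral>\<^sup>+x. ennreal (\<bar>k\<bar> powr p) * ennreal (\<bar>f x\<bar> powr p) \<partial>lborel)"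
    unfolding Qn_def by (intro nn_integral_cong) (simp add: abs_mult powr_mult ennreal_mult)
  also have "\<dots> = ennreal (\<bar>k\<bar> powr p) * Qn p f"
    unfolding Qn_def using assms by (subst nn_integral_cmult) auto
  finally show ?thesis .
qed

lemma Qn_mono:
  assumes "\<And>x. \<bar>f x\<bar> \<le> \<bar>g x\<bar>" "p > 0"
  shows "Qn p f \<le> Qn p g"
  unfolding Qn_def using assms
  by (intro nn_integral_mono ennreal_leI powr_mono2) auto

lemma Qn_zero_Lp_norm:
  assumes "f \<in> borel_measurable lborel" "Qn p f = 0"
  shows "Lp_norm p f = 0"
  using Lp_norm_Q[OF assms(1), of p] assms(2) by simp

definition lam :: "nat \<Rightarrow> real" where "lam n = (1/2)^Suc n"

lemma lam_pos: "lam n > 0" unfolding lam_def by simp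

lemma lam_sums: "lam sums 1"
proof -
  have "(\<lambda>n. (1/2::real)^n) sums (1 / (1 - 1/2))" by (rule geometric_sums) simp
  then have "(\<lambda>n. (1/2) * (1/2::real)^n) sums ((1/2) * (1 / (1 - 1/2)))" by (rule sums_mult)
  then show ?thesis unfolding lam_def by simp
qed

lemma ennreal_le_suminf_term: "(f n::ennreal) \<le> (\<Sum>n. f n)"
  using sum_le_suminf[OF summableI, of "{n}" f] by simp

lemma pw_bound:
  fixes y :: "nat \<Rightarrow> real"
  assumes p: "p > 0" and y0: "\<And>n. y n \<ge> 0" and sy: "summable y"
  shows "ennreal ((suminf y) powr p) \<le> (\<Sum>n. ennreal ((y n / lam n) powr p))"
proof (cases "(\<Sum>n. ennreal ((y n / lam n) powr p))" rule: ennreal_cases)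
  case top then show ?thesis by simp
next
  case (real r)
  note r0 = real(1) and rt = real(2)
  define \<tau> where "\<tau> = r powr (1/p)"
  have yb: "y n \<le> lam n * \<tau>" for n
  proof -
    have "ennreal ((y n / lam n) powr p) \<le> ennreal r"
      using ennreal_le_suminf_term[of "\<lambda>n. ennreal ((y n / lam n) powr p)" n] rt by metis
    then have yr: "(y n / lam n) powr p \<le> r" using r0 by (subst (asm) ennreal_le_iff) auto
    have "((y n / lam n) powr p) powr (1/p) \<le> r powr (1/p)"
      using powr_mono2[of "1/p" "(y n / lam n) powr p" r] p yr by simp
    moreover have "((y n / lam n) powr p) powr (1/p) = y n / lam n"
      using p y0[of n] lam_pos[of n] by (simp add: powr_powr)
    ultimately have "y n / lam n \<le> \<tau>" unfolding \<tau>_def by simp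
    then show ?thesis using lam_pos[of n] by (simp add: divide_le_eq mult.commute)
  qed
  have sl: "summable (\<lambda>n. lam n * \<tau>)" using lam_sums sums_summable summable_mult2 by blast
  have "suminf y \<le> (\<Sum>n. lam n * \<tau>)"
    by (rule suminf_le[OF yb sy sl])
  also have "\<dots> = \<tau>" using sums_unique[OF sums_mult2[OF lam_sums, of \<tau>]] by simp
  finally have le: "suminf y \<le> \<tau>" .
  have s0: "0 \<le> suminf y" by (rule suminf_nonneg[OF sy y0])
  have "(suminf y) powr p \<le> \<tau> powr p"
    using powr_mono2[of p "suminf y" \<tau>] p s0 le by simp
  also have "\<tau> powr p = r" unfolding \<tau>_def using p r0 by (simp add: powr_powr)
  finally show ?thesis using rt by (simp add: ennreal_leI)
qed

lemma real_le_suminf_term: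
  fixes f :: "nat \<Rightarrow> real"
  assumes "summable f" "\<And>n. 0 \<le> f n"
  shows "f n \<le> suminf f"
  using sum_le_suminf[of f "{n}"] assms by auto

lemma pow_sum_le:
  fixes u v :: real assumes p: "p > 0"
  shows "\<bar>u + v\<bar> powr p \<le> 2 powr p * (\<bar>u\<bar> powr p + \<bar>v\<bar> powr p)"
proof -
  define m where "m = max \<bar>u\<bar> \<bar>v\<bar>"
  have m0: "0 \<le> m" unfolding m_def by simp
  have "\<bar>u+v\<bar> \<le> 2 * m" unfolding m_def by auto
  then have "\<bar>u+v\<bar> powr p \<le> (2 * m) powr p" using powr_mono2[of p "\<bar>u+v\<bar>" "2*m"] p by simp
  also have "\<dots> = 2 powr p * m powr p" using m0 by (simp add: powr_mult)
  also have "m powr p \<le> \<bar>u\<bar> powr p + \<bar>v\<bar> powr p"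
    unfolding m_def by (cases "\<bar>u\<bar> \<le> \<bar>v\<bar>") (auto simp: max_def)
  then have "2 powr p * m powr p \<le> 2 powr p * (\<bar>u\<bar> powr p + \<bar>v\<bar> powr p)"
    by (intro mult_left_mono) auto
  finally show ?thesis .
qed

lemma Qn_add:
  assumes [measurable]: "f \<in> borel_measurable lborel" "g \<in> borel_measurable lborel" and p: "p > 0"
  shows "Qn p (\<lambda>x. f x + g x) \<le> ennreal (2 powr p) * (Qn p f + Qn p g)"
proof -
  have "Qn p (\<lambda>x. f x + g x) \<le> (\<integral>\<^sup>+x. ennreal (2 powr p) * (ennreal (\<bar>f x\<bar> powr p) + ennreal (\<bar>g x\<bar> powr p)) \<partial>lborel)"
    unfolding Qn_def
  proof (intro nn_integral_mono)
    fix x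
    have "ennreal (\<bar>f x + g x\<bar> powr p) \<le> ennreal (2 powr p * (\<bar>f x\<bar> powr p + \<bar>g x\<bar> powr p))"
      using pow_sum_le[OF p] by (intro ennreal_leI) auto
    also have "\<dots> = ennreal (2 powr p) * (ennreal (\<bar>f x\<bar> powr p) + ennreal (\<bar>g x\<bar> powr p))"
      by (simp add: ennreal_mult)
    finally show "ennreal (\<bar>f x + g x\<bar> powr p) \<le> ennreal (2 powr p) * (ennreal (\<bar>f x\<bar> powr p) + ennreal (\<bar>g x\<bar> powr p))" .
  qed
  also have "\<dots> = ennreal (2 powr p) * (Qn p f + Qn p g)"
    unfolding Qn_def by (subst nn_integral_cmult) (auto simp: nn_integral_add)
  finally show ?thesis .
qed

lemma tail_sums:
  fixes f :: "nat \<Rightarrow> real"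
  assumes "summable f"
  shows "(\<lambda>n. if N \<le> n then f n else 0) sums (suminf f - sum f {..<N})"
proof -
  have "(\<lambda>n. f n - (if n \<in> {..<N} then f n else 0)) sums (suminf f - sum f {..<N})"
    by (intro sums_diff summable_sums assms sums_If_finite_set) simp
  moreover have "(\<lambda>n. f n - (if n \<in> {..<N} then f n else 0)) = (\<lambda>n. if N \<le> n then f n else 0)"
    by (rule ext) auto
  ultimately show ?thesis by simp
qed

lemma Lp_norm_zero_fun: "p \<noteq> 0 \<Longrightarrow> Lp_norm p (\<lambda>t. 0) = 0"
  unfolding Lp_norm_def by simp

definition kap :: "real \<Rightarrow> real" where "kap p = 2 powr (-p) / 4"

locale gh =
  fixes p :: real and X :: "(real \<Rightarrow> real) set" and g :: "nat \<Rightarrow> real \<Rightarrow> real" and A :: "nat \<Rightarrow> real set"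
  assumes p1: "1 \<le> p"
  and X: "closed_Lp_subspace p X"
  and gX: "\<And>n. g n \<in> X"
  and Am: "\<And>n. A n \<in> sets lborel"
  and disj: "disjoint_family A"
  and hlo: "\<And>n. ennreal (1/2) \<le> Qn p (\<lambda>x. indicator (A n) x * g n x)"
  and hhi: "\<And>n. Qn p (\<lambda>x. indicator (A n) x * g n x) \<le> 1"
  and esum: "(\<Sum>n. \<integral>\<^sup>+x. ennreal ((\<bar>g n x - indicator (A n) x * g n x\<bar> / lam n) powr p) \<partial>lborel) \<le> ennreal (kap p)"
  and esumm: "\<And>x. summable (\<lambda>n. \<bar>g n x - indicator (A n) x * g n x\<bar>)"
begin

definition h where "h n = (\<lambda>x. indicator (A n) x * g n x)"
definition e where "e n = (\<lambda>x. g n x - h n x)"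
definition T where "T a = (\<lambda>x. \<Sum>n. a n * g n x)"
definition H where "H a = (\<lambda>x. \<Sum>n. a n * h n x)"
definition E where "E a = (\<lambda>x. \<Sum>n. a n * e n x)"
definition S where "S a = (\<Sum>n. \<bar>a n\<bar> powr p)"
definition bnd where "bnd a \<longleftrightarrow> (\<exists>B. \<forall>n. \<bar>a n\<bar> \<le> B)"

lemma p0: "p > 0" using p1 by simp

lemma gm[measurable]: "g n \<in> borel_measurable lborel"
  using gX[of n] X unfolding closed_Lp_subspace_def Lp_space_def by auto

lemma Am'[measurable]: "A n \<in> sets lborel" by (rule Am)

lemma hm[measurable]: "h n \<in> borel_measurable lborel" unfolding h_def by measurable
lemma em[measurable]: "e n \<in> borel_measurable lborel" unfolding e_def by measurable
lemma Tm[measurable]: "T a \<in> borel_measurable lborel" unfolding T_def by measurable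
lemma Hm[measurable]: "H a \<in> borel_measurable lborel" unfolding H_def by measurable
lemma Em[measurable]: "E a \<in> borel_measurable lborel" unfolding E_def by measurable

lemma g_eq: "g n x = h n x + e n x" unfolding e_def by simp

lemma h_single: "\<exists>m. \<forall>n. n \<noteq> m \<longrightarrow> h n x = 0"
proof (cases "\<exists>m. x \<in> A m")
  case True
  then obtain m where m: "x \<in> A m" by blast
  then have "\<forall>n. n \<noteq> m \<longrightarrow> x \<notin> A n" using disj unfolding disjoint_family_on_def by blast
  then show ?thesis by (intro exI[of _ m]) (auto simp: h_def)
next
  case False then show ?thesis by (auto simp: h_def)
qed

lemma lp_summ: "a \<in> lp_space p \<Longrightarrow> summable (\<lambda>n. \<bar>a n\<bar> powr p)"
  unfolding lp_space_def by simp

lemma S_nonneg: "a \<in> lp_space p \<Longrightarrow> S a \<ge> 0" unfolding S_def by (auto intro: suminf_nonneg dest: lp_summ)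

lemma term_le_S: "a \<in> lp_space p \<Longrightarrow> \<bar>a n\<bar> powr p \<le> S a"
  unfolding S_def by (rule real_le_suminf_term) (auto dest: lp_summ)

lemma lp_bnd: assumes "a \<in> lp_space p" shows "bnd a"
proof -
  have "\<bar>a n\<bar> \<le> S a powr (1/p)" for n
  proof -
    have "(\<bar>a n\<bar> powr p) powr (1/p) \<le> S a powr (1/p)"
      using powr_mono2[of "1/p" "\<bar>a n\<bar> powr p" "S a"] term_le_S[OF assms, of n] p0 by simp
    then show ?thesis using p0 by (simp add: powr_powr)
  qed
  then show ?thesis unfolding bnd_def by blast
qed

lemma summ_e_abs: assumes "bnd a" shows "summable (\<lambda>n. \<bar>a n * e n x\<bar>)"
proof -
  obtain B where B: "\<And>n. \<bar>a n\<bar> \<le> B" using assms unfolding bnd_def by blast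
  have "summable (\<lambda>n. B * \<bar>e n x\<bar>)"
    using esumm[of x] unfolding e_def h_def by (intro summable_mult) simp
  then show ?thesis
  proof (rule summable_comparison_test')
    fix n show "norm \<bar>a n * e n x\<bar> \<le> B * \<bar>e n x\<bar>"
      using B[of n] by (simp add: abs_mult mult_right_mono)
  qed
qed

lemma summ_e: "bnd a \<Longrightarrow> summable (\<lambda>n. a n * e n x)"
  by (rule summable_rabs_cancel[OF summ_e_abs])

lemma h_fun: obtains m where "(\<lambda>n. a n * h n x) = (\<lambda>n. if n = m then a m * h m x else 0)"
  "\<And>n. n \<noteq> m \<Longrightarrow> h n x = 0"
proof -
  obtain m where m: "\<forall>n. n \<noteq> m \<longrightarrow> h n x = 0" using h_single by blast
  then have "(\<lambda>n. a n * h n x) = (\<lambda>n. if n = m then a m * h m x else 0)" by (auto intro!: ext)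
  then show ?thesis using that m by blast
qed

lemma summ_h: "summable (\<lambda>n. a n * h n x)"
  by (rule h_fun[of a x]) simp

lemma summ_g: "bnd a \<Longrightarrow> summable (\<lambda>n. a n * g n x)"
proof -
  assume "bnd a"
  then have "summable (\<lambda>n. a n * h n x + a n * e n x)" by (intro summable_add summ_h summ_e)
  then show ?thesis by (simp add: g_eq distrib_left)
qed

lemma T_eq: "bnd a \<Longrightarrow> T a x = H a x + E a x"
  unfolding T_def H_def E_def
  by (subst suminf_add[OF summ_h summ_e]) (auto simp: g_eq distrib_left)

end

context gh begin

lemma QH: assumes "a \<in> lp_space p"
  shows "Qn p (H a) = (\<Sum>n. ennreal (\<bar>a n\<bar> powr p) * Qn p (h n))"
proof -
  have pw: "ennreal (\<bar>H a x\<bar> powr p) = (\<Sum>n. ennreal (\<bar>a n\<bar> powr p * \<bar>h n x\<bar> powr p))" for x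
  proof -
    obtain m where fe: "(\<lambda>n. a n * h n x) = (\<lambda>n. if n = m then a m * h m x else 0)"
      and z: "\<And>n. n \<noteq> m \<Longrightarrow> h n x = 0" using h_fun[of a x] by blast
    have Hx: "H a x = a m * h m x"
      unfolding H_def using fe sums_unique[OF sums_single[of m "\<lambda>_. a m * h m x"]] by simp
    have fe2: "(\<lambda>n. ennreal (\<bar>a n\<bar> powr p * \<bar>h n x\<bar> powr p)) =
        (\<lambda>n. if n = m then ennreal (\<bar>a m\<bar> powr p * \<bar>h m x\<bar> powr p) else 0)"
      using z by (intro ext) auto
    have "(\<Sum>n. ennreal (\<bar>a n\<bar> powr p * \<bar>h n x\<bar> powr p)) = ennreal (\<bar>a m\<bar> powr p * \<bar>h m x\<bar> powr p)"
      unfolding fe2 using sums_unique[OF sums_single[of m "\<lambda>_. ennreal (\<bar>a m\<bar> powr p * \<bar>h m x\<bar> powr p)"]] by simp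
    then show ?thesis unfolding Hx by (simp add: abs_mult powr_mult)
  qed
  have "Qn p (H a) = (\<integral>\<^sup>+x. (\<Sum>n. ennreal (\<bar>a n\<bar> powr p * \<bar>h n x\<bar> powr p)) \<partial>lborel)"
    unfolding Qn_def using pw by simp
  also have "\<dots> = (\<Sum>n. \<integral>\<^sup>+x. ennreal (\<bar>a n\<bar> powr p * \<bar>h n x\<bar> powr p) \<partial>lborel)"
    by (rule nn_integral_suminf) measurable
  also have "\<dots> = (\<Sum>n. ennreal (\<bar>a n\<bar> powr p) * Qn p (h n))"
  proof (rule suminf_cong)
    fix n
    have "(\<integral>\<^sup>+x. ennreal (\<bar>a n\<bar> powr p * \<bar>h n x\<bar> powr p) \<partial>lborel)
        = (\<integral>\<^sup>+x. ennreal (\<bar>a n\<bar> powr p) * ennreal (\<bar>h n x\<bar> powr p) \<partial>lborel)"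
      by (simp add: ennreal_mult)
    also have "\<dots> = ennreal (\<bar>a n\<bar> powr p) * Qn p (h n)"
      unfolding Qn_def by (rule nn_integral_cmult) measurable
    finally show "(\<integral>\<^sup>+x. ennreal (\<bar>a n\<bar> powr p * \<bar>h n x\<bar> powr p) \<partial>lborel) = ennreal (\<bar>a n\<bar> powr p) * Qn p (h n)" .
  qed
  finally show ?thesis .
qed

lemma S_ennreal: "a \<in> lp_space p \<Longrightarrow> (\<Sum>n. ennreal (\<bar>a n\<bar> powr p)) = ennreal (S a)"
  unfolding S_def by (rule suminf_ennreal2) (auto dest: lp_summ)

lemma hlo': "ennreal (1/2) \<le> Qn p (h n)" unfolding h_def by (rule hlo)
lemma hhi': "Qn p (h n) \<le> 1" unfolding h_def by (rule hhi)

lemma QH_bounds: assumes a: "a \<in> lp_space p"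
  shows "ennreal (S a / 2) \<le> Qn p (H a)" "Qn p (H a) \<le> ennreal (S a)"
proof -
  have "ennreal (S a / 2) = ennreal (1/2) * ennreal (S a)"
    by (subst ennreal_mult[symmetric]) (use S_nonneg[OF a] in auto)
  also have "\<dots> = ennreal (1/2) * (\<Sum>n. ennreal (\<bar>a n\<bar> powr p))" using S_ennreal[OF a] by simp
  also have "\<dots> = (\<Sum>n. ennreal (\<bar>a n\<bar> powr p) * ennreal (1/2))"
    by (subst ennreal_suminf_cmult[symmetric]) (simp add: mult.commute)
  also have "\<dots> \<le> (\<Sum>n. ennreal (\<bar>a n\<bar> powr p) * Qn p (h n))"
    using hlo' by (intro suminf_le summableI mult_left_mono) auto
  finally show "ennreal (S a / 2) \<le> Qn p (H a)" using QH[OF a] by simp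
  have "(\<Sum>n. ennreal (\<bar>a n\<bar> powr p) * Qn p (h n)) \<le> (\<Sum>n. ennreal (\<bar>a n\<bar> powr p) * 1)"
    using hhi' by (intro suminf_le summableI mult_left_mono) auto
  then show "Qn p (H a) \<le> ennreal (S a)" using QH[OF a] S_ennreal[OF a] by simp
qed

lemma QE: assumes a: "a \<in> lp_space p"
  shows "Qn p (E a) \<le> ennreal (S a) * ennreal (kap p)"
proof -
  have bd: "bnd a" by (rule lp_bnd[OF a])
  have pw: "ennreal (\<bar>E a x\<bar> powr p) \<le> ennreal (S a) * (\<Sum>n. ennreal ((\<bar>e n x\<bar> / lam n) powr p))" for x
  proof -
    have "\<bar>E a x\<bar> \<le> (\<Sum>n. \<bar>a n * e n x\<bar>)"
      unfolding E_def by (rule summable_rabs[OF summ_e_abs[OF bd]])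
    then have "ennreal (\<bar>E a x\<bar> powr p) \<le> ennreal ((\<Sum>n. \<bar>a n * e n x\<bar>) powr p)"
      using p0 by (intro ennreal_leI powr_mono2) auto
    also have "\<dots> \<le> (\<Sum>n. ennreal ((\<bar>a n * e n x\<bar> / lam n) powr p))"
      by (rule pw_bound[OF p0 _ summ_e_abs[OF bd]]) simp
    also have "\<dots> \<le> (\<Sum>n. ennreal (S a) * ennreal ((\<bar>e n x\<bar> / lam n) powr p))"
    proof (intro suminf_le summableI)
      fix n
      have "(\<bar>a n * e n x\<bar> / lam n) powr p = \<bar>a n\<bar> powr p * (\<bar>e n x\<bar> / lam n) powr p"
      proof -
        have "\<bar>a n * e n x\<bar> / lam n = \<bar>a n\<bar> * (\<bar>e n x\<bar> / lam n)" by (simp add: abs_mult)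
        show ?thesis unfolding \<open>\<bar>a n * e n x\<bar> / lam n = \<bar>a n\<bar> * (\<bar>e n x\<bar> / lam n)\<close>
          by (rule powr_mult; simp)
      qed
      also have "\<dots> \<le> S a * (\<bar>e n x\<bar> / lam n) powr p"
        using term_le_S[OF a, of n] by (intro mult_right_mono) auto
      finally show "ennreal ((\<bar>a n * e n x\<bar> / lam n) powr p) \<le> ennreal (S a) * ennreal ((\<bar>e n x\<bar> / lam n) powr p)"
        using S_nonneg[OF a] by (simp add: ennreal_mult[symmetric] ennreal_leI)
    qed
    finally show ?thesis by simp
  qed
  have "Qn p (E a) \<le> (\<integral>\<^sup>+x. ennreal (S a) * (\<Sum>n. ennreal ((\<bar>e n x\<bar> / lam n) powr p)) \<partial>lborel)"
    unfolding Qn_def by (intro nn_integral_mono pw)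
  also have "\<dots> = ennreal (S a) * (\<integral>\<^sup>+x. (\<Sum>n. ennreal ((\<bar>e n x\<bar> / lam n) powr p)) \<partial>lborel)"
    by (rule nn_integral_cmult) measurable
  also have "(\<integral>\<^sup>+x. (\<Sum>n. ennreal ((\<bar>e n x\<bar> / lam n) powr p)) \<partial>lborel) = (\<Sum>n. \<integral>\<^sup>+x. ennreal ((\<bar>e n x\<bar> / lam n) powr p) \<partial>lborel)"
    by (rule nn_integral_suminf) measurable
  also have "\<dots> \<le> ennreal (kap p)" using esum unfolding e_def h_def by simp
  finally show ?thesis by (simp add: mult_left_mono)
qed

end

context gh begin

lemma QT: assumes a: "a \<in> lp_space p"
  shows "\<exists>t\<ge>0. Qn p (T a) = ennreal t \<and> kap p * S a \<le> t \<and> t \<le> 2 powr p * (1 + kap p) * S a"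
proof -
  have bd: "bnd a" by (rule lp_bnd[OF a])
  have S0: "S a \<ge> 0" by (rule S_nonneg[OF a])
  have k0: "kap p \<ge> 0" unfolding kap_def by simp
  have TE: "T a = (\<lambda>x. H a x + E a x)" using T_eq[OF bd] by (intro ext) simp
  have up: "Qn p (T a) \<le> ennreal (2 powr p * (1 + kap p) * S a)"
  proof -
    have "Qn p (T a) \<le> ennreal (2 powr p) * (Qn p (H a) + Qn p (E a))"
      unfolding TE by (rule Qn_add) (auto simp: p0)
    also have "\<dots> \<le> ennreal (2 powr p) * (ennreal (S a) + ennreal (S a) * ennreal (kap p))"
      using QH_bounds(2)[OF a] QE[OF a] by (intro mult_left_mono add_mono) auto
    also have "ennreal (S a) + ennreal (S a) * ennreal (kap p) = ennreal (S a + S a * kap p)"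
      using S0 k0 by (simp add: ennreal_mult)
    also have "ennreal (2 powr p) * ennreal (S a + S a * kap p) = ennreal (2 powr p * (S a + S a * kap p))"
      using S0 k0 by (simp add: ennreal_mult)
    also have "2 powr p * (S a + S a * kap p) = 2 powr p * (1 + kap p) * S a"
      by (simp add: algebra_simps)
    finally show ?thesis .
  qed
  obtain t where t0: "t \<ge> 0" and tq: "Qn p (T a) = ennreal t"
  proof (cases "Qn p (T a)" rule: ennreal_cases)
    case (real r) then show ?thesis using that by blast
  next
    case top then show ?thesis using up by (simp add: top_unique)
  qed
  have tup: "t \<le> 2 powr p * (1 + kap p) * S a"
    using up tq S0 k0 by simp
  have HE: "H a = (\<lambda>x. T a x + (- E a x))" using T_eq[OF bd] by (intro ext) simp
  have QmE: "Qn p (\<lambda>x. - E a x) = Qn p (E a)" unfolding Qn_def by simp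
  have "ennreal (S a / 2) \<le> Qn p (H a)" by (rule QH_bounds(1)[OF a])
  also have "\<dots> \<le> ennreal (2 powr p) * (Qn p (T a) + Qn p (\<lambda>x. - E a x))"
    unfolding HE by (rule Qn_add) (auto simp: p0)
  also have "\<dots> \<le> ennreal (2 powr p) * (ennreal t + ennreal (S a) * ennreal (kap p))"
    unfolding QmE tq using QE[OF a] by (intro mult_left_mono add_mono) auto
  also have "ennreal t + ennreal (S a) * ennreal (kap p) = ennreal (t + S a * kap p)"
    using S0 k0 t0 by (simp add: ennreal_mult)
  also have "ennreal (2 powr p) * ennreal (t + S a * kap p) = ennreal (2 powr p * (t + S a * kap p))"
    using S0 k0 t0 by (simp add: ennreal_mult)
  finally have ineq: "S a / 2 \<le> 2 powr p * (t + S a * kap p)"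
    using S0 k0 t0 by (subst (asm) ennreal_le_iff) auto
  define q where "q = 2 powr p"
  define r where "r = 2 powr (-p)"
  have qr: "q * r = 1" unfolding q_def r_def by (simp add: powr_add[symmetric])
  have r0: "r > 0" unfolding r_def by simp
  have kr: "kap p = r / 4" unfolding kap_def r_def by simp
  have "S a / 2 \<le> q * t + (q * r) * S a / 4" using ineq unfolding q_def[symmetric] kr
    by (simp add: algebra_simps)
  then have "S a / 4 \<le> q * t" using qr by simp
  then have "r * (S a / 4) \<le> r * (q * t)" using r0 by (intro mult_left_mono) auto
  also have "r * (q * t) = t" using qr by (simp add: algebra_simps)
  finally have tlo: "kap p * S a \<le> t" unfolding kr by simp
  show ?thesis using t0 tq tlo tup by blast
qed

lemma lp_norm_S: "lp_norm p a = S a powr (1/p)"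
  unfolding lp_norm_def S_def by simp

lemma norm_bounds: assumes a: "a \<in> lp_space p"
  shows "kap p powr (1/p) * lp_norm p a \<le> Lp_norm p (T a)"
    "Lp_norm p (T a) \<le> (2 powr p * (1 + kap p)) powr (1/p) * lp_norm p a"
    "Qn p (T a) < \<infinity>"
proof -
  obtain t where t0: "t \<ge> 0" and tq: "Qn p (T a) = ennreal t" and tlo: "kap p * S a \<le> t"
    and tup: "t \<le> 2 powr p * (1 + kap p) * S a"
    using QT[OF a] by blast
  have S0: "S a \<ge> 0" by (rule S_nonneg[OF a])
  have k0: "kap p \<ge> 0" unfolding kap_def by simp
  have Ln: "Lp_norm p (T a) = t powr (1/p)" using Lp_norm_Q[OF Tm, of p a] tq t0 by simp
  have "kap p powr (1/p) * lp_norm p a = (kap p * S a) powr (1/p)"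
    unfolding lp_norm_S using S0 k0 by (simp add: powr_mult)
  also have "\<dots> \<le> t powr (1/p)" using tlo S0 k0 p0 by (intro powr_mono2) auto
  finally show "kap p powr (1/p) * lp_norm p a \<le> Lp_norm p (T a)" unfolding Ln .
  have "t powr (1/p) \<le> (2 powr p * (1 + kap p) * S a) powr (1/p)" using tup t0 p0 by (intro powr_mono2) auto
  also have "\<dots> = (2 powr p * (1 + kap p)) powr (1/p) * lp_norm p a"
    unfolding lp_norm_S using S0 k0 by (simp add: powr_mult)
  finally show "Lp_norm p (T a) \<le> (2 powr p * (1 + kap p)) powr (1/p) * lp_norm p a" unfolding Ln .
  show "Qn p (T a) < \<infinity>" using tq by simp
qed

end

context gh begin

lemma X_add: "f \<in> X \<Longrightarrow> k \<in> X \<Longrightarrow> (\<lambda>x. f x + k x) \<in> X"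
  using X unfolding closed_Lp_subspace_def by blast
lemma X_mult: "f \<in> X \<Longrightarrow> (\<lambda>x. c * f x) \<in> X"
  using X unfolding closed_Lp_subspace_def by blast
lemma X_zero: "(\<lambda>x. 0) \<in> X"
  using X unfolding closed_Lp_subspace_def by blast
lemma X_closed: "f \<in> Lp_space p \<Longrightarrow> (\<And>e. e > 0 \<Longrightarrow> \<exists>k\<in>X. Lp_norm p (\<lambda>x. f x - k x) < e) \<Longrightarrow> f \<in> X"
  using X unfolding closed_Lp_subspace_def by blast

lemma psX: "(\<lambda>x. \<Sum>n<N. a n * g n x) \<in> X"
proof (induction N)
  case 0 then show ?case using X_zero by simp
next
  case (Suc N)
  have "(\<lambda>x. (\<Sum>n<N. a n * g n x) + a N * g N x) \<in> X"
    using X_add[OF Suc X_mult[OF gX[of N], of "a N"]] by simp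
  then show ?case by simp
qed

lemma tail_facts:
  fixes N :: nat
  assumes a: "a \<in> lp_space p"
  defines "b \<equiv> (\<lambda>n. if N \<le> n then a n else 0)"
  shows "b \<in> lp_space p" "S b = S a - (\<Sum>n<N. \<bar>a n\<bar> powr p)"
    "(\<lambda>x. T a x - (\<Sum>n<N. a n * g n x)) = T b"
proof -
  have fe: "(\<lambda>n. \<bar>b n\<bar> powr p) = (\<lambda>n. if N \<le> n then \<bar>a n\<bar> powr p else 0)"
    unfolding b_def by (intro ext) auto
  have sm: "(\<lambda>n. \<bar>b n\<bar> powr p) sums (S a - (\<Sum>n<N. \<bar>a n\<bar> powr p))"
    unfolding fe S_def by (rule tail_sums[OF lp_summ[OF a]])
  then show "b \<in> lp_space p" unfolding lp_space_def by (auto simp: sums_summable)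
  show "S b = S a - (\<Sum>n<N. \<bar>a n\<bar> powr p)" using sums_unique[OF sm] by (simp add: S_def)
  show "(\<lambda>x. T a x - (\<Sum>n<N. a n * g n x)) = T b"
  proof (rule ext)
    fix x
    have fe2: "(\<lambda>n. b n * g n x) = (\<lambda>n. if N \<le> n then a n * g n x else 0)"
      unfolding b_def by (intro ext) auto
    have "(\<lambda>n. b n * g n x) sums (T a x - (\<Sum>n<N. a n * g n x))"
      unfolding fe2 T_def by (rule tail_sums[OF summ_g[OF lp_bnd[OF a]]])
    then show "T a x - (\<Sum>n<N. a n * g n x) = T b x" unfolding T_def by (simp add: sums_unique)
  qed
qed

lemma TX: assumes a: "a \<in> lp_space p" shows "T a \<in> X"
proof (rule X_closed)
  show "T a \<in> Lp_space p" using Lp_space_iff_Q[OF Tm] norm_bounds(3)[OF a] by blast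
next
  fix \<epsilon> :: real assume e: "\<epsilon> > 0"
  define B0 where "B0 = (2 powr p * (1 + kap p)) powr (1/p)"
  have k0: "kap p \<ge> 0" unfolding kap_def by simp
  have B0: "B0 > 0" unfolding B0_def using k0 by simp
  have "(\<lambda>N. S a - (\<Sum>n<N. \<bar>a n\<bar> powr p)) \<longlonglongrightarrow> S a - S a"
    unfolding S_def by (intro tendsto_diff tendsto_const summable_LIMSEQ lp_summ[OF a])
  then have "eventually (\<lambda>N. S a - (\<Sum>n<N. \<bar>a n\<bar> powr p) < (\<epsilon> / B0) powr p) sequentially"
    using e B0 by (intro order_tendstoD(2)) auto
  then obtain N where N: "S a - (\<Sum>n<N. \<bar>a n\<bar> powr p) < (\<epsilon> / B0) powr p"
    unfolding eventually_sequentially by blast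
  define b where "b = (\<lambda>n. if N \<le> n then a n else 0)"
  have b: "b \<in> lp_space p" and Sb: "S b = S a - (\<Sum>n<N. \<bar>a n\<bar> powr p)"
    and Tb: "(\<lambda>x. T a x - (\<Sum>n<N. a n * g n x)) = T b"
    using tail_facts[OF a, where N=N] unfolding b_def by auto
  have "Lp_norm p (T b) \<le> B0 * lp_norm p b" using norm_bounds(2)[OF b] unfolding B0_def .
  also have "lp_norm p b = S b powr (1/p)" by (rule lp_norm_S)
  also have "S b powr (1/p) < ((\<epsilon> / B0) powr p) powr (1/p)"
    using N Sb S_nonneg[OF b] p0 by (intro powr_less_mono2) auto
  also have "((\<epsilon> / B0) powr p) powr (1/p) = \<epsilon> / B0" using e B0 p0 by (simp add: powr_powr)
  finally have "Lp_norm p (T b) < \<epsilon>" using B0 by (simp add: mult_strict_left_mono field_simps)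
  then have "Lp_norm p (\<lambda>x. T a x - (\<lambda>x. \<Sum>n<N. a n * g n x) x) < \<epsilon>" using Tb by simp
  then show "\<exists>k\<in>X. Lp_norm p (\<lambda>x. T a x - k x) < \<epsilon>" using psX[where N=N and a=a] by (intro bexI[where x="(\<lambda>x. \<Sum>n<N. a n * g n x)"]) auto
qed

lemma core: "contains_lp_copy p X"
  unfolding contains_lp_copy_def
proof (intro exI conjI ballI allI)
  show "kap p powr (1/p) > 0" unfolding kap_def by simp
  have "kap p \<ge> 0" unfolding kap_def by simp
  then show "(2 powr p * (1 + kap p)) powr (1/p) > 0" by simp
next
  fix a assume a: "a \<in> lp_space p"
  show "T a \<in> X" by (rule TX[OF a])
  show "kap p powr (1/p) * lp_norm p a \<le> Lp_norm p (T a)" by (rule norm_bounds(1)[OF a])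
  show "Lp_norm p (T a) \<le> (2 powr p * (1 + kap p)) powr (1/p) * lp_norm p a" by (rule norm_bounds(2)[OF a])
next
  fix a b assume a: "a \<in> lp_space p" and b: "b \<in> lp_space p"
  have ba: "bnd a" and bb: "bnd b" using lp_bnd a b by auto
  have bab: "bnd (\<lambda>n. a n + b n)"
  proof -
    obtain B1 B2 where "\<And>n. \<bar>a n\<bar> \<le> B1" "\<And>n. \<bar>b n\<bar> \<le> B2" using ba bb unfolding bnd_def by blast
    then have "\<bar>a n + b n\<bar> \<le> B1 + B2" for n by (meson abs_triangle_ineq add_mono order_trans)
    then show ?thesis unfolding bnd_def by blast
  qed
  have "(\<lambda>t. T (\<lambda>n. a n + b n) t - T a t - T b t) = (\<lambda>t. 0)"
  proof (rule ext)
    fix t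
    have "T a t + T b t = (\<Sum>n. a n * g n t + b n * g n t)"
      unfolding T_def by (rule suminf_add[OF summ_g[OF ba] summ_g[OF bb]])
    then show "T (\<lambda>n. a n + b n) t - T a t - T b t = 0" unfolding T_def by (simp add: distrib_right)
  qed
  then show "Lp_norm p (\<lambda>t. T (\<lambda>n. a n + b n) t - T a t - T b t) = 0"
    using Lp_norm_zero_fun p0 by simp
next
  fix a c assume a: "a \<in> lp_space p"
  have "(\<lambda>t. T (\<lambda>n. c * a n) t - c * T a t) = (\<lambda>t. 0)"
  proof (rule ext)
    fix t
    have "c * T a t = (\<Sum>n. c * (a n * g n t))"
      unfolding T_def by (rule suminf_mult[OF summ_g[OF lp_bnd[OF a]], symmetric])
    then show "T (\<lambda>n. c * a n) t - c * T a t = 0" unfolding T_def by (simp add: mult.assoc)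
  qed
  then show "Lp_norm p (\<lambda>t. T (\<lambda>n. c * a n) t - c * T a t) = 0"
    using Lp_norm_zero_fun p0 by simp
qed

end

lemma summ_from_fin:
  fixes y :: "nat \<Rightarrow> real"
  assumes p: "p > 0" and y0: "\<And>n. y n \<ge> 0"
    and fin: "(\<Sum>n. ennreal ((y n / lam n) powr p)) \<noteq> \<infinity>"
  shows "summable y"
proof -
  obtain r where r0: "r \<ge> 0" and rt: "(\<Sum>n. ennreal ((y n / lam n) powr p)) = ennreal r"
  proof (cases "(\<Sum>n. ennreal ((y n / lam n) powr p))" rule: ennreal_cases)
    case (real r) then show ?thesis using that by blast
  next
    case top then show ?thesis using fin by simp
  qed
  define \<tau> where "\<tau> = r powr (1/p)"
  have yb: "y n \<le> lam n * \<tau>" for n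
  proof -
    have "ennreal ((y n / lam n) powr p) \<le> ennreal r"
      using ennreal_le_suminf_term[of "\<lambda>n. ennreal ((y n / lam n) powr p)" n] rt by metis
    then have yr: "(y n / lam n) powr p \<le> r" using r0 by (subst (asm) ennreal_le_iff) auto
    have "((y n / lam n) powr p) powr (1/p) \<le> r powr (1/p)"
      using powr_mono2[of "1/p" "(y n / lam n) powr p" r] p yr by simp
    moreover have "((y n / lam n) powr p) powr (1/p) = y n / lam n"
      using p y0[of n] lam_pos[of n] by (simp add: powr_powr)
    ultimately have "y n / lam n \<le> \<tau>" unfolding \<tau>_def by simp
    then show ?thesis using lam_pos[of n] by (simp add: divide_le_eq mult.commute)
  qed
  have sl: "summable (\<lambda>n. lam n * \<tau>)" using lam_sums sums_summable summable_mult2 by blast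
  show ?thesis
  proof (rule summable_comparison_test'[OF sl])
    fix n show "norm (y n) \<le> lam n * \<tau>" using yb[of n] y0[of n] by simp
  qed
qed

lemma modify:
  fixes p :: real and X :: "(real \<Rightarrow> real) set" and g :: "nat \<Rightarrow> real \<Rightarrow> real" and A :: "nat \<Rightarrow> real set"
  assumes p1: "1 \<le> p"
  and X: "closed_Lp_subspace p X"
  and gX: "\<And>n. g n \<in> X"
  and Am[measurable]: "\<And>n. A n \<in> sets lborel"
  and disj: "disjoint_family A"
  and hlo: "\<And>n. ennreal (1/2) \<le> Qn p (\<lambda>x. indicator (A n) x * g n x)"
  and hhi: "\<And>n. Qn p (\<lambda>x. indicator (A n) x * g n x) \<le> 1"
  and esum: "(\<Sum>n. \<integral>\<^sup>+x. ennreal ((\<bar>g n x - indicator (A n) x * g n x\<bar> / lam n) powr p) \<partial>lborel) \<le> ennreal (kap p)"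
  shows "contains_lp_copy p X"
proof -
  have p0: "p > 0" using p1 by simp
  have gm[measurable]: "g n \<in> borel_measurable lborel" for n
    using gX[of n] X unfolding closed_Lp_subspace_def Lp_space_def by auto
  define Qf where "Qf x = (\<Sum>n. ennreal ((\<bar>g n x - indicator (A n) x * g n x\<bar> / lam n) powr p))" for x
  have Qfm[measurable]: "Qf \<in> borel_measurable lborel" unfolding Qf_def by measurable
  have "integral\<^sup>N lborel Qf = (\<Sum>n. \<integral>\<^sup>+x. ennreal ((\<bar>g n x - indicator (A n) x * g n x\<bar> / lam n) powr p) \<partial>lborel)"
    unfolding Qf_def by (rule nn_integral_suminf) measurable
  also have "\<dots> < \<infinity>" using esum by (simp add: le_less_trans)
  finally have AEf: "AE x in lborel. Qf x \<noteq> \<infinity>" by (intro nn_integral_PInf_AE) auto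
  define Z where "Z = {x. Qf x = \<infinity>}"
  have Zm[measurable]: "Z \<in> sets lborel" unfolding Z_def by measurable
  have AEZ: "AE x in lborel. x \<notin> Z" using AEf unfolding Z_def by simp
  define g' where "g' n x = indicator (-Z) x * g n x" for n x
  have g'm[measurable]: "g' n \<in> borel_measurable lborel" for n unfolding g'_def by measurable
  have AEg: "AE x in lborel. g' n x = g n x" for n using AEZ by eventually_elim (auto simp: g'_def)
  have g'X: "g' n \<in> X" for n
  proof -
    have gL: "g n \<in> Lp_space p" using gX[of n] X unfolding closed_Lp_subspace_def by auto
    have "Qn p (g' n) \<le> Qn p (g n)" using p0 by (intro Qn_mono) (auto simp: g'_def indicator_def)
    then have "g' n \<in> Lp_space p" using Lp_memQ[OF gL] Lp_space_iff_Q[OF g'm] by (simp add: le_less_trans)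
    moreover have "Lp_norm p (\<lambda>x. g' n x - g n x) = 0"
    proof (rule Qn_zero_Lp_norm)
      show "Qn p (\<lambda>x. g' n x - g n x) = 0" unfolding Qn_def
        using AEg[of n] by (subst nn_integral_cong_AE[where v="\<lambda>x. 0"]) (auto elim!: eventually_mono simp: p0)
    qed measurable
    ultimately have L: "g' n \<in> Lp_space p" and Z: "Lp_norm p (\<lambda>x. g' n x - g n x) = 0" by auto
    have cl: "\<forall>f\<in>Lp_space p. (\<forall>e>0. \<exists>k\<in>X. Lp_norm p (\<lambda>x. f x - k x) < e) \<longrightarrow> f \<in> X"
      using X unfolding closed_Lp_subspace_def by blast
    have "\<forall>e>0. \<exists>k\<in>X. Lp_norm p (\<lambda>x. g' n x - k x) < e"
    proof (intro allI impI)
      fix e :: real assume "e > 0"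
      then show "\<exists>k\<in>X. Lp_norm p (\<lambda>x. g' n x - k x) < e" using Z gX[of n] by (intro bexI[of _ "g n"]) auto
    qed
    then show ?thesis using cl L by blast
  qed
  interpret gh p X g' A
  proof
    show "1 \<le> p" by (rule p1)
    show "closed_Lp_subspace p X" by (rule X)
    show "g' n \<in> X" for n by (rule g'X)
    show "A n \<in> sets lborel" for n by (rule Am)
    show "disjoint_family A" by (rule disj)
    have eqh: "Qn p (\<lambda>x. indicator (A n) x * g' n x) = Qn p (\<lambda>x. indicator (A n) x * g n x)" for n
      unfolding Qn_def using AEg[of n] by (intro nn_integral_cong_AE) (auto elim!: eventually_mono)
    show "ennreal (1/2) \<le> Qn p (\<lambda>x. indicator (A n) x * g' n x)" for n using hlo[of n] eqh[of n] by simp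
    show "Qn p (\<lambda>x. indicator (A n) x * g' n x) \<le> 1" for n using hhi[of n] eqh[of n] by simp
    have "(\<Sum>n. \<integral>\<^sup>+x. ennreal ((\<bar>g' n x - indicator (A n) x * g' n x\<bar> / lam n) powr p) \<partial>lborel)
      \<le> (\<Sum>n. \<integral>\<^sup>+x. ennreal ((\<bar>g n x - indicator (A n) x * g n x\<bar> / lam n) powr p) \<partial>lborel)"
    proof (intro suminf_le summableI nn_integral_mono ennreal_leI powr_mono2)
      fix n x
      show "\<bar>g' n x - indicator (A n) x * g' n x\<bar> / lam n \<le> \<bar>g n x - indicator (A n) x * g n x\<bar> / lam n"
        using lam_pos[of n] by (intro divide_right_mono) (auto simp: g'_def indicator_def)
    qed (use p0 lam_pos in \<open>auto intro: divide_nonneg_pos less_imp_le\<close>)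
    then show "(\<Sum>n. \<integral>\<^sup>+x. ennreal ((\<bar>g' n x - indicator (A n) x * g' n x\<bar> / lam n) powr p) \<partial>lborel) \<le> ennreal (kap p)"
      using esum by simp
    show "summable (\<lambda>n. \<bar>g' n x - indicator (A n) x * g' n x\<bar>)" for x
    proof (cases "x \<in> Z")
      case True then show ?thesis by (simp add: g'_def)
    next
      case False
      then have "(\<lambda>n. \<bar>g' n x - indicator (A n) x * g' n x\<bar>) = (\<lambda>n. \<bar>g n x - indicator (A n) x * g n x\<bar>)"
        by (simp add: g'_def)
      moreover have "summable (\<lambda>n. \<bar>g n x - indicator (A n) x * g n x\<bar>)"
        by (rule summ_from_fin[OF p0]) (use False in \<open>auto simp: Z_def Qf_def\<close>)
      ultimately show ?thesis by simp
    qed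
  qed
  show ?thesis by (rule core)
qed

lemma ennreal_lt_obtain:
  assumes "x < ennreal d"
  obtains r where "r \<ge> 0" "x = ennreal r" "r < d"
proof (cases x rule: ennreal_cases)
  case (real r)
  then show ?thesis using that assms by (auto simp: ennreal_less_iff)
next
  case top then show ?thesis using assms by simp
qed

lemma stepA:
  assumes p1: "1 \<le> p" and X: "closed_Lp_subspace p X"
    and H: "\<forall>C. \<exists>f\<in>X. \<not> (Lp_norm p (\<lambda>x. indicator {-c..c} x * f x) \<le> Lp_norm p f \<and>
           Lp_norm p f \<le> C * Lp_norm p (\<lambda>x. indicator {-c..c} x * f x))"
    and e: "\<epsilon> > 0"
  shows "\<exists>f\<in>X. Qn p f = 1 \<and> Qn p (\<lambda>x. indicator {-c..c} x * f x) < ennreal \<epsilon>"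
proof -
  have p0: "p > 0" using p1 by simp
  define C where "C = (1/\<epsilon>) powr (1/p)"
  obtain f where fX: "f \<in> X" and nf: "\<not> (Lp_norm p (\<lambda>x. indicator {-c..c} x * f x) \<le> Lp_norm p f \<and>
           Lp_norm p f \<le> C * Lp_norm p (\<lambda>x. indicator {-c..c} x * f x))"
    using H by blast
  have fL: "f \<in> Lp_space p" using X fX unfolding closed_Lp_subspace_def by auto
  have fm[measurable]: "f \<in> borel_measurable lborel" by (rule Lp_memD[OF fL])
  define f1 where "f1 = (\<lambda>x. indicator {-c..c} x * f x)"
  have f1m[measurable]: "f1 \<in> borel_measurable lborel" unfolding f1_def by measurable
  have le: "Qn p f1 \<le> Qn p f" unfolding f1_def using p0 by (intro Qn_mono) (auto simp: indicator_def)
  have fin: "Qn p f < \<infinity>" by (rule Lp_memQ[OF fL])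
  obtain q where q0: "q \<ge> 0" and qq: "Qn p f = ennreal q"
  proof (cases "Qn p f" rule: ennreal_cases)
    case (real r) then show ?thesis using that by blast
  next
    case top then show ?thesis using fin by simp
  qed
  obtain r where r0: "r \<ge> 0" and rq: "Qn p f1 = ennreal r"
  proof (cases "Qn p f1" rule: ennreal_cases)
    case (real r) then show ?thesis using that by blast
  next
    case top then show ?thesis using le qq by (simp add: top_unique)
  qed
  have rle: "r \<le> q" using le qq rq q0 by simp
  have N1: "Lp_norm p f = q powr (1/p)" using Lp_norm_Q[OF fm, of p] qq q0 by simp
  have N2: "Lp_norm p f1 = r powr (1/p)" using Lp_norm_Q[OF f1m, of p] rq r0 by simp
  have i1: "Lp_norm p f1 \<le> Lp_norm p f" unfolding N1 N2 using rle r0 p0 by (intro powr_mono2) auto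
  have gt: "\<not> (q powr (1/p) \<le> C * r powr (1/p))" using nf i1 N1 N2 unfolding f1_def by auto
  have Cr: "C * r powr (1/p) = (r / \<epsilon>) powr (1/p)" unfolding C_def using r0 e by (simp add: powr_mult[symmetric])
  have rq2: "r / \<epsilon> < q"
  proof (rule ccontr)
    assume "\<not> r / \<epsilon> < q"
    then have "q powr (1/p) \<le> (r / \<epsilon>) powr (1/p)" using q0 p0 by (intro powr_mono2) auto
    then show False using gt Cr by simp
  qed
  have qpos: "q > 0" using rq2 r0 e by (smt (verit) divide_nonneg_pos)
  define k where "k = 1 / q powr (1/p)"
  have kp: "\<bar>k\<bar> powr p = 1 / q"
  proof -
    have "\<bar>k\<bar> = 1 / q powr (1/p)" unfolding k_def using qpos by simp
    then have "\<bar>k\<bar> powr p = 1 / (q powr (1/p)) powr p" by (simp add: powr_divide)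
    also have "(q powr (1/p)) powr p = q" using qpos p0 by (simp add: powr_powr)
    finally show ?thesis .
  qed
  have fX': "(\<lambda>x. k * f x) \<in> X" using X fX unfolding closed_Lp_subspace_def by blast
  have Q1: "Qn p (\<lambda>x. k * f x) = 1"
    using Qn_cmult[OF fm p0, of k] kp qq qpos by (simp add: ennreal_mult[symmetric])
  have "Qn p (\<lambda>x. indicator {-c..c} x * (k * f x)) = Qn p (\<lambda>x. k * f1 x)"
    unfolding f1_def by (simp add: algebra_simps)
  also have "\<dots> = ennreal (1/q) * ennreal r" using Qn_cmult[OF f1m p0, of k] kp rq by simp
  also have "\<dots> = ennreal (r / q)" using qpos r0 by (simp add: ennreal_mult[symmetric])
  also have "\<dots> < ennreal \<epsilon>"
  proof -
    have "r / q < \<epsilon>" using rq2 qpos e by (simp add: field_simps)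
    then show ?thesis using r0 qpos by (simp add: ennreal_less_iff)
  qed
  finally show ?thesis using fX' Q1 by blast
qed

lemma stepB:
  assumes fm[measurable]: "f \<in> borel_measurable lborel" and fin: "Qn p f < \<infinity>" and p0: "p > 0"
    and e: "\<epsilon> > 0"
  shows "\<exists>d \<ge> c0. Qn p (\<lambda>x. indicator (-{-d..d}) x * f x) < ennreal \<epsilon>"
proof -
  define u where "u i x = indicator (-{-real i..real i}) x * \<bar>f x\<bar> powr p" for i :: nat and x
  have um[measurable]: "u i \<in> borel_measurable lborel" for i unfolding u_def by measurable
  have lim: "(\<lambda>i. \<integral>\<^sup>+x. norm ((\<lambda>x. 0::real) x - u i x) \<partial>lborel) \<longlonglongrightarrow> 0"
  proof (rule nn_integral_dominated_convergence_norm[where w="\<lambda>x. \<bar>f x\<bar> powr p"])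
    show "AE x in lborel. norm (u j x) \<le> \<bar>f x\<bar> powr p" for j by (auto simp: u_def indicator_def)
    show "(\<integral>\<^sup>+x. ennreal (\<bar>f x\<bar> powr p) \<partial>lborel) < \<infinity>" using fin unfolding Qn_def .
    show "AE x in lborel. (\<lambda>i. u i x) \<longlonglongrightarrow> 0"
    proof (intro AE_I2 tendsto_eventually)
      fix x :: real
      have "u i x = 0" if "nat \<lceil>\<bar>x\<bar>\<rceil> \<le> i" for i
      proof -
        have "\<bar>x\<bar> \<le> real (nat \<lceil>\<bar>x\<bar>\<rceil>)" by (rule real_nat_ceiling_ge)
        also have "\<dots> \<le> real i" by (simp only: of_nat_le_iff that)
        finally show ?thesis by (auto simp: u_def indicator_def abs_le_iff)
      qed
      then show "eventually (\<lambda>i. u i x = 0) sequentially" unfolding eventually_sequentially by blast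
    qed
  qed measurable
  have eq: "(\<integral>\<^sup>+x. norm ((\<lambda>x. 0::real) x - u i x) \<partial>lborel) = Qn p (\<lambda>x. indicator (-{-real i..real i}) x * f x)" for i
    unfolding Qn_def by (intro nn_integral_cong) (auto simp: u_def indicator_def)
  have "eventually (\<lambda>i. Qn p (\<lambda>x. indicator (-{-real i..real i}) x * f x) < ennreal \<epsilon>) sequentially"
    using order_tendstoD(2)[OF lim, of "ennreal \<epsilon>"] e unfolding eq by simp
  then obtain N where N: "\<And>i. i \<ge> N \<Longrightarrow> Qn p (\<lambda>x. indicator (-{-real i..real i}) x * f x) < ennreal \<epsilon>"
    unfolding eventually_sequentially by blast
  define i where "i = max N (nat \<lceil>c0\<rceil>)"
  have "c0 \<le> real (nat \<lceil>c0\<rceil>)" by (rule real_nat_ceiling_ge)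
  also have "\<dots> \<le> real i" unfolding of_nat_le_iff i_def by simp
  finally have "c0 \<le> real i" .
  moreover have "Qn p (\<lambda>x. indicator (-{-real i..real i}) x * f x) < ennreal \<epsilon>" using N unfolding i_def by simp
  ultimately show ?thesis by blast
qed

lemma decomp:
  fixes G :: "real \<Rightarrow> real"
  assumes Gm[measurable]: "G \<in> borel_measurable lborel" and a: "0 < a" "a < b" and p0: "p > 0"
    and G1: "Qn p G = 1"
    and Gi: "Qn p (\<lambda>x. indicator {-a..a} x * G x) < ennreal \<delta>"
    and Go: "Qn p (\<lambda>x. indicator (-{-b..b}) x * G x) < ennreal \<delta>"
    and d: "\<delta> \<le> 1/4"
  shows "ennreal (1/2) \<le> Qn p (\<lambda>x. indicator {x. a < \<bar>x\<bar> \<and> \<bar>x\<bar> \<le> b} x * G x)"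
    "Qn p (\<lambda>x. indicator {x. a < \<bar>x\<bar> \<and> \<bar>x\<bar> \<le> b} x * G x) \<le> 1"
    "Qn p (\<lambda>x. G x - indicator {x. a < \<bar>x\<bar> \<and> \<bar>x\<bar> \<le> b} x * G x) < ennreal (2 * \<delta>)"
proof -
  define J where "J = {x::real. a < \<bar>x\<bar> \<and> \<bar>x\<bar> \<le> b}"
  have Jm[measurable]: "J \<in> sets lborel" unfolding J_def by measurable
  have pw1: "ennreal (\<bar>indicator J x * G x\<bar> powr p) + ennreal (\<bar>G x - indicator J x * G x\<bar> powr p) = ennreal (\<bar>G x\<bar> powr p)" for x
    by (auto simp: indicator_def)
  have pw2: "ennreal (\<bar>indicator {-a..a} x * G x\<bar> powr p) + ennreal (\<bar>indicator (-{-b..b}) x * G x\<bar> powr p) = ennreal (\<bar>G x - indicator J x * G x\<bar> powr p)" for x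
    using a by (auto simp: indicator_def abs_le_iff J_def)
  have QG: "Qn p (\<lambda>x. indicator J x * G x) + Qn p (\<lambda>x. G x - indicator J x * G x) = Qn p G"
  proof -
    have "Qn p (\<lambda>x. indicator J x * G x) + Qn p (\<lambda>x. G x - indicator J x * G x)
      = (\<integral>\<^sup>+x. ennreal (\<bar>indicator J x * G x\<bar> powr p) + ennreal (\<bar>G x - indicator J x * G x\<bar> powr p) \<partial>lborel)"
      unfolding Qn_def by (rule nn_integral_add[symmetric]) measurable
    also have "\<dots> = Qn p G" unfolding Qn_def by (intro nn_integral_cong) (rule pw1)
    finally show ?thesis .
  qed
  have QE: "Qn p (\<lambda>x. indicator {-a..a} x * G x) + Qn p (\<lambda>x. indicator (-{-b..b}) x * G x) = Qn p (\<lambda>x. G x - indicator J x * G x)"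
  proof -
    have "Qn p (\<lambda>x. indicator {-a..a} x * G x) + Qn p (\<lambda>x. indicator (-{-b..b}) x * G x)
      = (\<integral>\<^sup>+x. ennreal (\<bar>indicator {-a..a} x * G x\<bar> powr p) + ennreal (\<bar>indicator (-{-b..b}) x * G x\<bar> powr p) \<partial>lborel)"
      unfolding Qn_def by (rule nn_integral_add[symmetric]) measurable
    also have "\<dots> = Qn p (\<lambda>x. G x - indicator J x * G x)" unfolding Qn_def by (intro nn_integral_cong) (rule pw2)
    finally show ?thesis .
  qed
  obtain r1 where r1: "r1 \<ge> 0" "Qn p (\<lambda>x. indicator {-a..a} x * G x) = ennreal r1" "r1 < \<delta>"
    using ennreal_lt_obtain[OF Gi] by blast
  obtain r2 where r2: "r2 \<ge> 0" "Qn p (\<lambda>x. indicator (-{-b..b}) x * G x) = ennreal r2" "r2 < \<delta>"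
    using ennreal_lt_obtain[OF Go] by blast
  have Qe: "Qn p (\<lambda>x. G x - indicator J x * G x) = ennreal (r1 + r2)" using QE r1 r2 by simp
  show "Qn p (\<lambda>x. G x - indicator {x. a < \<bar>x\<bar> \<and> \<bar>x\<bar> \<le> b} x * G x) < ennreal (2 * \<delta>)"
  proof -
    have "ennreal (r1 + r2) < ennreal (2*\<delta>)" using r1 r2 by (subst ennreal_less_iff) auto
    then show ?thesis by (simp only: J_def[symmetric] Qe)
  qed
  have QJle: "Qn p (\<lambda>x. indicator J x * G x) \<le> 1"
  proof -
    have "Qn p (\<lambda>x. indicator J x * G x) \<le> Qn p (\<lambda>x. indicator J x * G x) + Qn p (\<lambda>x. G x - indicator J x * G x)"
      by (rule add_increasing2) simp_all
    also have "\<dots> = 1" using QG G1 by (simp only:)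
    finally show ?thesis .
  qed
  then show "Qn p (\<lambda>x. indicator {x. a < \<bar>x\<bar> \<and> \<bar>x\<bar> \<le> b} x * G x) \<le> 1" unfolding J_def .
  obtain s where s: "s \<ge> 0" "Qn p (\<lambda>x. indicator J x * G x) = ennreal s"
  proof (cases "Qn p (\<lambda>x. indicator J x * G x)" rule: ennreal_cases)
    case (real r) then show ?thesis using that by blast
  next
    case top then show ?thesis using QJle by (simp add: top_unique)
  qed
  have "ennreal s + ennreal (r1 + r2) = 1" by (metis QG G1 s(2) Qe)
  then have "ennreal (s + (r1 + r2)) = 1" using s r1 r2 by (subst ennreal_plus) auto
  then have "s + (r1 + r2) = 1" using s r1 r2 by (simp add: ennreal_eq_1 del: ennreal_plus)
  then have "1/2 \<le> s" using r1 r2 d by linarith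
  then have "ennreal (1/2) \<le> ennreal s" by (rule ennreal_leI)
  then show "ennreal (1/2) \<le> Qn p (\<lambda>x. indicator {x. a < \<bar>x\<bar> \<and> \<bar>x\<bar> \<le> b} x * G x)"
    by (simp only: J_def[symmetric] s(2))
qed

theorem lemma2p13:
  fixes p :: real and X :: "(real \<Rightarrow> real) set"
  assumes "1 \<le> p" and "p \<noteq> 2"
    and "closed_Lp_subspace p X"
    and "\<not> contains_lp_copy p X"
  shows "\<exists>c>0. \<exists>C. \<forall>f\<in>X.
           Lp_norm p (\<lambda>x. indicator {-c..c} x * f x) \<le> Lp_norm p f \<and>
           Lp_norm p f \<le> C * Lp_norm p (\<lambda>x. indicator {-c..c} x * f x)"
proof (rule ccontr)
  assume neg: "\<not> ?thesis"
  have p1: "1 \<le> p" and X: "closed_Lp_subspace p X" using assms by auto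
  have p0: "p > 0" using p1 by simp
  have XL: "f \<in> Lp_space p" if "f \<in> X" for f using X that unfolding closed_Lp_subspace_def by auto
  have HA: "\<exists>f\<in>X. Qn p f = 1 \<and> Qn p (\<lambda>x. indicator {-c..c} x * f x) < ennreal \<epsilon>"
    if c: "c > 0" and e: "\<epsilon> > 0" for c \<epsilon>
  proof -
    have "\<forall>C. \<exists>f\<in>X. \<not> (Lp_norm p (\<lambda>x. indicator {-c..c} x * f x) \<le> Lp_norm p f \<and>
           Lp_norm p f \<le> C * Lp_norm p (\<lambda>x. indicator {-c..c} x * f x))"
      using neg c by blast
    then show ?thesis by (rule stepA[OF p1 X _ e])
  qed
  define F where "F c \<epsilon> = (SOME f. f \<in> X \<and> Qn p f = 1 \<and> Qn p (\<lambda>x. indicator {-c..c} x * f x) < ennreal \<epsilon>)" for c \<epsilon>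
  have F: "F c \<epsilon> \<in> X \<and> Qn p (F c \<epsilon>) = 1 \<and> Qn p (\<lambda>x. indicator {-c..c} x * F c \<epsilon> x) < ennreal \<epsilon>"
    if "c > 0" "\<epsilon> > 0" for c \<epsilon>
    unfolding F_def
    by (rule someI_ex[where P="\<lambda>f. f \<in> X \<and> Qn p f = 1 \<and> Qn p (\<lambda>x. indicator {-c..c} x * f x) < ennreal \<epsilon>"])
      (use HA[OF that] in blast)
  define D where "D f \<epsilon> c0 = (SOME d. d \<ge> c0 \<and> Qn p (\<lambda>x. indicator (-{-d..d}) x * f x) < ennreal \<epsilon>)" for f \<epsilon> and c0 :: real
  have D: "D f \<epsilon> c0 \<ge> c0 \<and> Qn p (\<lambda>x. indicator (-{-D f \<epsilon> c0..D f \<epsilon> c0}) x * f x) < ennreal \<epsilon>"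
    if "f \<in> X" "\<epsilon> > 0" for f \<epsilon> c0
    unfolding D_def
  proof (rule someI_ex[where P="\<lambda>d. d \<ge> c0 \<and> Qn p (\<lambda>x. indicator (-{-d..d}) x * f x) < ennreal \<epsilon>"])
    show "\<exists>d\<ge>c0. Qn p (\<lambda>x. indicator (-{-d..d}) x * f x) < ennreal \<epsilon>"
      by (rule stepB[OF Lp_memD[OF XL[OF that(1)]] Lp_memQ[OF XL[OF that(1)]] p0 that(2)])
  qed
  define \<delta> where "\<delta> n = kap p * lam n powr p * lam n / 2" for n
  have kap0: "kap p > 0" unfolding kap_def by simp
  have kap4: "kap p \<le> 1/4"
  proof -
    have "2 powr (-p) \<le> 2 powr 0" using p0 by (intro powr_mono) auto
    then show ?thesis unfolding kap_def by simp
  qed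
  have lam1: "lam n \<le> 1/2" for n unfolding lam_def by (simp add: power_le_one)
  have \<delta>0: "\<delta> n > 0" for n unfolding \<delta>_def using kap0 lam_pos[of n] by simp
  have \<delta>4: "\<delta> n \<le> 1/4" for n
  proof -
    have lp: "lam n powr p \<le> 1"
      using lam_pos[of n] lam1[of n] p0 by (intro powr_le1) auto
    have "kap p * lam n powr p \<le> 1/4 * 1"
      using kap0 kap4 lp lam_pos[of n] by (intro mult_mono) auto
    moreover have "lam n / 2 \<le> 1" using lam1[of n] by simp
    ultimately have "kap p * lam n powr p * (lam n / 2) \<le> 1/4 * 1"
      using lam_pos[of n] kap0 by (intro mult_mono) auto
    then show ?thesis unfolding \<delta>_def by simp
  qed
  define c where "c = rec_nat (1::real) (\<lambda>n cn. D (F cn (\<delta> n)) (\<delta> n) (cn + 1))"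
  have c0: "c 0 = 1" and cS: "c (Suc n) = D (F (c n) (\<delta> n)) (\<delta> n) (c n + 1)" for n
    by (simp_all add: c_def)
  define g where "g n = F (c n) (\<delta> n)" for n
  have cge: "c n \<ge> 1" for n
  proof (induction n)
    case 0 then show ?case by (simp add: c0)
  next
    case (Suc n)
    have "g n \<in> X" unfolding g_def using F[of "c n" "\<delta> n"] Suc \<delta>0 by simp
    then have "c (Suc n) \<ge> c n + 1" unfolding cS using D[of "g n" "\<delta> n" "c n + 1"] \<delta>0 unfolding g_def by simp
    then show ?case using Suc by simp
  qed
  have gF: "g n \<in> X \<and> Qn p (g n) = 1 \<and> Qn p (\<lambda>x. indicator {-c n..c n} x * g n x) < ennreal (\<delta> n)" for n
    unfolding g_def using F[of "c n" "\<delta> n"] cge[of n] \<delta>0[of n] by simp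
  have gD: "c (Suc n) \<ge> c n + 1 \<and> Qn p (\<lambda>x. indicator (-{-c (Suc n)..c (Suc n)}) x * g n x) < ennreal (\<delta> n)" for n
    unfolding cS using D[of "g n" "\<delta> n" "c n + 1"] gF[of n] \<delta>0[of n] unfolding g_def by simp
  have cmono: "c m \<le> c n" if "m \<le> n" for m n
  proof (rule lift_Suc_mono_le[of c, OF _ that])
    fix k show "c k \<le> c (Suc k)" using gD[of k] by linarith
  qed
  define A where "A n = {x. c n < \<bar>x\<bar> \<and> \<bar>x\<bar> \<le> c (Suc n)}" for n
  have Am[measurable]: "A n \<in> sets lborel" for n unfolding A_def by measurable
  have disj: "disjoint_family A"
    unfolding disjoint_family_on_def
  proof (intro ballI impI)
    fix m n :: nat assume "m \<noteq> n"
    then consider "Suc m \<le> n" | "Suc n \<le> m" by linarith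
    then show "A m \<inter> A n = {}"
    proof cases
      case 1 then have "c (Suc m) \<le> c n" by (rule cmono)
      then show ?thesis unfolding A_def by auto
    next
      case 2 then have "c (Suc n) \<le> c m" by (rule cmono)
      then show ?thesis unfolding A_def by auto
    qed
  qed
  have gm[measurable]: "g n \<in> borel_measurable lborel" for n using Lp_memD[OF XL] gF by blast
  have dec: "ennreal (1/2) \<le> Qn p (\<lambda>x. indicator (A n) x * g n x)"
    "Qn p (\<lambda>x. indicator (A n) x * g n x) \<le> 1"
    "Qn p (\<lambda>x. g n x - indicator (A n) x * g n x) < ennreal (2 * \<delta> n)" for n
  proof -
    have a: "0 < c n" "c n < c (Suc n)" using cge[of n] gD[of n] by auto
    note d = decomp[OF gm a p0 conjunct1[OF conjunct2[OF gF]] conjunct2[OF conjunct2[OF gF]] conjunct2[OF gD] \<delta>4]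
    show "ennreal (1/2) \<le> Qn p (\<lambda>x. indicator (A n) x * g n x)" using d(1) unfolding A_def .
    show "Qn p (\<lambda>x. indicator (A n) x * g n x) \<le> 1" using d(2) unfolding A_def .
    show "Qn p (\<lambda>x. g n x - indicator (A n) x * g n x) < ennreal (2 * \<delta> n)" using d(3) unfolding A_def .
  qed
  have termb: "(\<integral>\<^sup>+x. ennreal ((\<bar>g n x - indicator (A n) x * g n x\<bar> / lam n) powr p) \<partial>lborel) \<le> ennreal (kap p * lam n)" for n
  proof -
    have lp0: "lam n powr p > 0" using lam_pos[of n] by simp
    have "(\<integral>\<^sup>+x. ennreal ((\<bar>g n x - indicator (A n) x * g n x\<bar> / lam n) powr p) \<partial>lborel)
        = (\<integral>\<^sup>+x. ennreal (1 / lam n powr p) * ennreal (\<bar>g n x - indicator (A n) x * g n x\<bar> powr p) \<partial>lborel)"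
      using lam_pos[of n] by (intro nn_integral_cong) (simp add: powr_divide ennreal_mult[symmetric])
    also have "\<dots> = ennreal (1 / lam n powr p) * Qn p (\<lambda>x. g n x - indicator (A n) x * g n x)"
      unfolding Qn_def by (intro nn_integral_cmult) measurable
    also have "\<dots> \<le> ennreal (1 / lam n powr p) * ennreal (2 * \<delta> n)"
      using dec(3)[of n] by (intro mult_left_mono) auto
    also have "\<dots> = ennreal (kap p * lam n)"
      using lp0 \<delta>0[of n] unfolding \<delta>_def by (simp add: ennreal_mult[symmetric] field_simps)
    finally show ?thesis .
  qed
  have "(\<Sum>n. \<integral>\<^sup>+x. ennreal ((\<bar>g n x - indicator (A n) x * g n x\<bar> / lam n) powr p) \<partial>lborel)
      \<le> (\<Sum>n. ennreal (kap p * lam n))"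
    by (intro suminf_le summableI termb)
  also have "\<dots> = ennreal (\<Sum>n. kap p * lam n)"
    using kap0 lam_pos lam_sums
    by (intro suminf_ennreal2) (auto intro: less_imp_le summable_mult sums_summable)
  also have "(\<Sum>n. kap p * lam n) = kap p"
    using sums_unique[OF sums_mult[OF lam_sums, of "kap p"]] by simp
  finally have esum: "(\<Sum>n. \<integral>\<^sup>+x. ennreal ((\<bar>g n x - indicator (A n) x * g n x\<bar> / lam n) powr p) \<partial>lborel) \<le> ennreal (kap p)" .
  have "contains_lp_copy p X"
    by (rule modify[OF p1 X _ Am disj dec(1) dec(2) esum]) (use gF in blast)
  then show False using assms(4) by contradiction
qed

end
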